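(* Let $P\in\mathfrak N^{LS}_2$ with $h_P\ge2$ and let $r:P\to R$ be a retraction such that $R(0)$ is a 2-element antichain. (1) $R(0)\subseteq P(0)\cup P(1)$ and $R(0)\cap P(0)\neq\emptyset$; moreover, if $R(0)\cap P(1)\neq\emptyset$, then $h_R\ge1$ and $R(1\to h_R)$ is a retract of $P(2\to h_P)$. (2) There is a retraction $s:P\to S$ with $S\cong R$, $S(0)\subseteq P(0)$, $s[P(0)]=S(0)$, and $s^{-1}(p)=\{p\}$ for some $p\in S(0)$.
   Context: All posets are finite; $h_P$ is the height; level sets $P(0)=\min P$, $P(k+1)=\min(P\setminus\bigcup_{i\le k}P(i))$; $P(k\to\ell)=\bigcup_{i=k}^\ell P(i)$ as induced subposet. Level sets $R(\ell)$ and $R(k\to\ell)$ of a retract $R$ refer to $R$'s own levels. $A<B$ means $a<b$ for all $a\in A,b\in B$. A retraction $r:P\to R$ is an idempotent order-preserving self-map with image $R$. A section of width three is a poset $P$ of height $h_P\ge1$ with carrier $\{c_{k,j}:k\in[0,h_P],j\in\{0,1,2\}\}$ such that: $c_{0,j}<\dots<c_{h_P,j}$ for each $j$; each $\{c_{k,0},c_{k,1},c_{k,2}\}$ is an antichain; $c_{k,i}<c_{\ell,j}\Rightarrow c_{k,i+1}<c_{\ell,j+1}$ (indices mod 3); and for no $k$ is $P(k)<P(k+1)$. It is nice if for all $x<y$: $\{z:z>x\}\not\subseteq\{z:z\ge y\}$ and $\{z:z<y\}\not\subseteq\{z:z\le x\}$. $\mathfrak N_2$ is the class of nice sections of width three of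 height $\ge2$ with horizon 2 (i.e. $P(k)<P(\ell)$ whenever $\ell\ge k+2$). $\mathfrak N^{LS}_2=\{P(0\to h_P-1):P\in\mathfrak N_2\}$ (lower segments). Each consecutive level pair $P(k)\cup P(k+1)$ of such posets is a 6-crown ($x_0<y_0>x_1<y_1>x_2<y_2>x_0$, no other comparabilities) or of type $3C$ (three disjoint 2-chains), and $P(0)\cup P(1)$ is a 6-crown for $P\in\mathfrak N^{LS}_2$ with $h_P\ge1$. *)

theory Defs
  imports Main
begin

text \<open>Finite posets are represented by a carrier set together with an order
relation; subposets are always induced (same relation, smaller carrier).\<close>

definition is_poset :: "'a set \<Rightarrow> ('a \<Rightarrow> 'a \<Rightarrow> bool) \<Rightarrow> bool" where
  "is_poset A le \<longleftrightarrow> finite A \<and> (\<forall>x\<in>A. le x x)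
     \<and> (\<forall>x\<in>A. \<forall>y\<in>A. le x y \<and> le y x \<longrightarrow> x = y)
     \<and> (\<forall>x\<in>A. \<forall>y\<in>A. \<forall>z\<in>A. le x y \<and> le y z \<longrightarrow> le x z)"

definition strict :: "('a \<Rightarrow> 'a \<Rightarrow> bool) \<Rightarrow> 'a \<Rightarrow> 'a \<Rightarrow> bool" where
  "strict le x y \<longleftrightarrow> le x y \<and> x \<noteq> y"

definition minimals :: "'a set \<Rightarrow> ('a \<Rightarrow> 'a \<Rightarrow> bool) \<Rightarrow> 'a set" where
  "minimals A le = {x\<in>A. \<not> (\<exists>y\<in>A. strict le y x)}"

fun rest :: "'a set \<Rightarrow> ('a \<Rightarrow> 'a \<Rightarrow> bool) \<Rightarrow> nat \<Rightarrow> 'a set" where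
  "rest A le 0 = A"
| "rest A le (Suc k) = rest A le k - minimals (rest A le k) le"

definition level :: "'a set \<Rightarrow> ('a \<Rightarrow> 'a \<Rightarrow> bool) \<Rightarrow> nat \<Rightarrow> 'a set" where
  "level A le k = minimals (rest A le k) le"

definition height :: "'a set \<Rightarrow> ('a \<Rightarrow> 'a \<Rightarrow> bool) \<Rightarrow> nat" where
  "height A le = Max {k. level A le k \<noteq> {}}"

definition levels_between :: "'a set \<Rightarrow> ('a \<Rightarrow> 'a \<Rightarrow> bool) \<Rightarrow> nat \<Rightarrow> nat \<Rightarrow> 'a set" where
  "levels_between A le k l = (\<Union>i\<in>{k..l}. level A le i)"

definition set_less :: "('a \<Rightarrow> 'a \<Rightarrow> bool) \<Rightarrow> 'a set \<Rightarrow> 'a set \<Rightarrow> bool" where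
  "set_less le X Y \<longleftrightarrow> (\<forall>x\<in>X. \<forall>y\<in>Y. strict le x y)"

definition antichain :: "('a \<Rightarrow> 'a \<Rightarrow> bool) \<Rightarrow> 'a set \<Rightarrow> bool" where
  "antichain le X \<longleftrightarrow> (\<forall>x\<in>X. \<forall>y\<in>X. le x y \<longrightarrow> x = y)"

definition order_preserving :: "'a set \<Rightarrow> ('a \<Rightarrow> 'a \<Rightarrow> bool) \<Rightarrow> ('a \<Rightarrow> 'a) \<Rightarrow> bool" where
  "order_preserving A le r \<longleftrightarrow> (\<forall>x\<in>A. \<forall>y\<in>A. le x y \<longrightarrow> le (r x) (r y))"

definition retraction :: "'a set \<Rightarrow> ('a \<Rightarrow> 'a \<Rightarrow> bool) \<Rightarrow> ('a \<Rightarrow> 'a) \<Rightarrow> bool" where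
  "retraction A le r \<longleftrightarrow> r ` A \<subseteq> A \<and> order_preserving A le r \<and> (\<forall>x\<in>A. r (r x) = r x)"

definition order_iso :: "'a set \<Rightarrow> ('a \<Rightarrow> 'a \<Rightarrow> bool) \<Rightarrow> 'b set \<Rightarrow> ('b \<Rightarrow> 'b \<Rightarrow> bool) \<Rightarrow> bool" where
  "order_iso A le B le' \<longleftrightarrow>
     (\<exists>f. bij_betw f A B \<and> (\<forall>x\<in>A. \<forall>y\<in>A. le x y \<longleftrightarrow> le' (f x) (f y)))"

definition is_retract_of :: "'b set \<Rightarrow> ('b \<Rightarrow> 'b \<Rightarrow> bool) \<Rightarrow> 'a set \<Rightarrow> ('a \<Rightarrow> 'a \<Rightarrow> bool) \<Rightarrow> bool" where
  "is_retract_of B leB A leA \<longleftrightarrow> (\<exists>r. retraction A leA r \<and> order_iso (r ` A) leA B leB)"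

text \<open>Sections of width three: the element c_{k,j} is represented by the pair (k,j).\<close>
definition sec_carrier :: "nat \<Rightarrow> (nat \<times> nat) set" where
  "sec_carrier h = {..h} \<times> {..<3}"

definition section3 :: "nat \<Rightarrow> (nat \<times> nat \<Rightarrow> nat \<times> nat \<Rightarrow> bool) \<Rightarrow> bool" where
  "section3 h le \<longleftrightarrow>
     is_poset (sec_carrier h) le \<and> h \<ge> 1 \<and> height (sec_carrier h) le = h
     \<and> (\<forall>j<3. \<forall>k<h. strict le (k, j) (Suc k, j))
     \<and> (\<forall>k\<le>h. antichain le {(k,0), (k,1), (k,2)})
     \<and> (\<forall>k\<le>h. \<forall>l\<le>h. \<forall>i<3. \<forall>j<3. strict le (k, i) (l, j)
            \<longrightarrow> strict le (k, (i + 1) mod 3) (l, (j + 1) mod 3))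
     \<and> (\<forall>k<h. \<not> set_less le (level (sec_carrier h) le k) (level (sec_carrier h) le (Suc k)))"

definition nice :: "'a set \<Rightarrow> ('a \<Rightarrow> 'a \<Rightarrow> bool) \<Rightarrow> bool" where
  "nice A le \<longleftrightarrow> (\<forall>x\<in>A. \<forall>y\<in>A. strict le x y \<longrightarrow>
       \<not> ({z\<in>A. strict le x z} \<subseteq> {z\<in>A. le y z})
     \<and> \<not> ({z\<in>A. strict le z y} \<subseteq> {z\<in>A. le z x}))"

definition horizon2 :: "'a set \<Rightarrow> ('a \<Rightarrow> 'a \<Rightarrow> bool) \<Rightarrow> bool" where
  "horizon2 A le \<longleftrightarrow> (\<forall>k l. l \<ge> k + 2 \<longrightarrow> set_less le (level A le k) (level A le l))"

text \<open>Membership in the class N_2 (for the section with carrier indexed by [0,h]\<times>{0,1,2}).\<close>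
definition N2 :: "nat \<Rightarrow> (nat \<times> nat \<Rightarrow> nat \<times> nat \<Rightarrow> bool) \<Rightarrow> bool" where
  "N2 h le \<longleftrightarrow> section3 h le \<and> nice (sec_carrier h) le \<and> h \<ge> 2
     \<and> horizon2 (sec_carrier h) le"

text \<open>Carrier of the lower segment Q(0 \<rightarrow> h_Q - 1) of a section Q; these carriers
 (with the induced order) are exactly the members of N_2^LS.\<close>
definition lower_segment :: "nat \<Rightarrow> (nat \<times> nat \<Rightarrow> nat \<times> nat \<Rightarrow> bool) \<Rightarrow> (nat \<times> nat) set" where
  "lower_segment h le = levels_between (sec_carrier h) le 0 (h - 1)"

end

theory Submission
  imports Defs
begin


lemma poset_subset: "is_poset A le \<Longrightarrow> B \<subseteq> A \<Longrightarrow> is_poset B le"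
  unfolding is_poset_def by (meson finite_subset subsetD)

lemma po_fin: "is_poset A le \<Longrightarrow> finite A" unfolding is_poset_def by blast
lemma po_refl: "is_poset A le \<Longrightarrow> x \<in> A \<Longrightarrow> le x x" unfolding is_poset_def by blast
lemma po_antisym: "is_poset A le \<Longrightarrow> x \<in> A \<Longrightarrow> y \<in> A \<Longrightarrow> le x y \<Longrightarrow> le y x \<Longrightarrow> x = y"
  unfolding is_poset_def by blast
lemma po_trans: "is_poset A le \<Longrightarrow> x \<in> A \<Longrightarrow> y \<in> A \<Longrightarrow> z \<in> A \<Longrightarrow> le x y \<Longrightarrow> le y z \<Longrightarrow> le x z"
  unfolding is_poset_def by blast

lemma fin_min:
  assumes "finite S" "S \<noteq> {}" "is_poset S le"
  shows "\<exists>m\<in>S. \<forall>y\<in>S. le y m \<longrightarrow> y = m"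
  using assms
proof (induction S rule: finite_ne_induct)
  case (singleton x) then show ?case by auto
next
  case (insert x F)
  have pF: "is_poset F le" using insert.prems poset_subset by blast
  then obtain m where m: "m \<in> F" "\<forall>y\<in>F. le y m \<longrightarrow> y = m" using insert.IH by blast
  show ?case
  proof (cases "le x m")
    case True
    have "\<forall>y\<in>insert x F. le y x \<longrightarrow> y = x"
    proof (intro ballI impI)
      fix y assume y: "y \<in> insert x F" "le y x"
      show "y = x"
      proof (cases "y = x")
        case False
        then have "y \<in> F" using y by auto
        have "le y m" using po_trans[OF insert.prems, of y x m] y True m(1) \<open>y\<in>F\<close> by blast
        then have "y = m" using m \<open>y\<in>F\<close> by blast
        then show ?thesis using po_antisym[OF insert.prems, of x m] y True m(1) by blast
      qed
    qed
    then show ?thesis by blast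
  next
    case False
    then show ?thesis using m by auto
  qed
qed

lemma minimals_iff: "x \<in> minimals A le \<longleftrightarrow> x \<in> A \<and> (\<forall>y\<in>A. le y x \<longrightarrow> y = x)"
  unfolding minimals_def strict_def by blast

lemma ex_min_below:
  assumes "is_poset A le" "x \<in> A"
  shows "\<exists>m\<in>minimals A le. le m x"
proof -
  let ?D = "{y\<in>A. le y x}"
  have fD: "finite ?D" using po_fin[OF assms(1)] by auto
  have ne: "?D \<noteq> {}" using po_refl[OF assms] assms(2) by auto
  have pD: "is_poset ?D le" by (rule poset_subset[OF assms(1)]) auto
  obtain m where m: "m \<in> ?D" "\<forall>y\<in>?D. le y m \<longrightarrow> y = m" using fin_min[OF fD ne pD] by auto
  have "m \<in> minimals A le"
    unfolding minimals_iff
  proof (intro conjI ballI impI)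
    show "m \<in> A" using m by auto
    fix y assume "y \<in> A" "le y m"
    then have "le y x" using po_trans[OF assms(1) \<open>y\<in>A\<close> _ assms(2) \<open>le y m\<close>] m by auto
    then show "y = m" using m \<open>y\<in>A\<close> \<open>le y m\<close> by simp
  qed
  then show ?thesis using m by auto
qed

lemma rest_sub: "rest A le k \<subseteq> A"
  by (induction k) auto

lemma rest_mono: "j \<le> k \<Longrightarrow> rest A le k \<subseteq> rest A le j"
proof (induction k)
  case 0 then show ?case by auto
next
  case (Suc k) then show ?case by (auto simp: le_Suc_eq)
qed

lemma level_sub_rest: "level A le k \<subseteq> rest A le k"
  unfolding level_def minimals_def by auto

lemma level_0: "level A le 0 = minimals A le"
  unfolding level_def by simp

lemma rest_card:
  assumes "is_poset A le"
  shows "rest A le k = {} \<or> card (rest A le k) + k \<le> card A"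
proof (induction k)
  case 0 then show ?case by simp
next
  case (Suc k)
  show ?case
  proof (cases "rest A le k = {}")
    case True then show ?thesis by simp
  next
    case False
    have fin: "finite (rest A le k)" by (rule finite_subset[OF rest_sub po_fin[OF assms]])
    have p: "is_poset (rest A le k) le" by (rule poset_subset[OF assms rest_sub])
    obtain m where m: "m \<in> rest A le k" "\<forall>y\<in>rest A le k. le y m \<longrightarrow> y = m"
      using fin_min[OF fin False p] by auto
    have "m \<in> minimals (rest A le k) le" using m by (simp add: minimals_iff)
    then have "rest A le (Suc k) \<subset> rest A le k" using m by auto
    then have "card (rest A le (Suc k)) < card (rest A le k)" by (rule psubset_card_mono[OF fin])
    then show ?thesis using Suc.IH False by auto
  qed
qed

lemma rest_ne_bound:
  assumes "is_poset A le" "rest A le k \<noteq> {}"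
  shows "k \<le> card A"
  using rest_card[OF assms(1), of k] assms(2) by auto

lemma in_some_level:
  assumes "is_poset A le" "x \<in> A"
  shows "\<exists>k. x \<in> level A le k"
proof -
  let ?K = "{k. x \<in> rest A le k}"
  have "?K \<subseteq> {..card A}" using rest_ne_bound[OF assms(1)] by auto
  then have fK: "finite ?K" using finite_subset by auto
  have "0 \<in> ?K" using assms by simp
  define k where "k = Max ?K"
  have kK: "k \<in> ?K" unfolding k_def using fK \<open>0\<in>?K\<close> Max_in by blast
  have "Suc k \<notin> ?K"
  proof
    assume "Suc k \<in> ?K"
    then have "Suc k \<le> k" unfolding k_def using fK Max_ge by blast
    then show False by simp
  qed
  then have "x \<in> minimals (rest A le k) le" using kK by auto
  then show ?thesis unfolding level_def by blast
qed

lemma height_ge: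
  assumes "is_poset A le" "x \<in> level A le k"
  shows "k \<le> height A le"
proof -
  have "{k. level A le k \<noteq> {}} \<subseteq> {..card A}"
  proof
    fix k assume "k \<in> {k. level A le k \<noteq> {}}"
    then have "rest A le k \<noteq> {}" using level_sub_rest[of A le k] by auto
    then show "k \<in> {..card A}" using rest_ne_bound[OF assms(1)] by auto
  qed
  then have "finite {k. level A le k \<noteq> {}}" using finite_subset by auto
  then show ?thesis unfolding height_def using assms(2) by (intro Max_ge) auto
qed

lemma level_pos_disj:
  assumes "k \<ge> 1"
  shows "level A le k \<inter> minimals A le = {}"
proof -
  have "level A le k \<subseteq> rest A le 1" using level_sub_rest[of A le k] rest_mono[OF assms, of A le] by auto
  then show ?thesis by auto
qed

lemma levels_between_1:
  assumes "is_poset A le"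
  shows "levels_between A le 1 (height A le) = A - minimals A le"
proof
  show "levels_between A le 1 (height A le) \<subseteq> A - minimals A le"
  proof
    fix x assume "x \<in> levels_between A le 1 (height A le)"
    then obtain i where i: "i \<ge> 1" "x \<in> level A le i" unfolding levels_between_def by auto
    have "x \<in> A" using i(2) level_sub_rest[of A le i] rest_sub[of A le i] by auto
    moreover have "x \<notin> minimals A le" using level_pos_disj[OF i(1), of A le] i(2) by auto
    ultimately show "x \<in> A - minimals A le" by blast
  qed
next
  show "A - minimals A le \<subseteq> levels_between A le 1 (height A le)"
  proof
    fix x assume x: "x \<in> A - minimals A le"
    then obtain k where k: "x \<in> level A le k" using in_some_level[OF assms(1)] x by auto
    have "k \<noteq> 0"
    proof
      assume "k = 0" with k have "x \<in> minimals A le" by (simp add: level_0)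
      with x show False by simp
    qed
    moreover have "k \<le> height A le" using height_ge[OF assms k] .
    ultimately show "x \<in> levels_between A le 1 (height A le)"
      unfolding levels_between_def using k by auto
  qed
qed

lemma height_pos:
  assumes "is_poset A le" "x \<in> A" "x \<notin> minimals A le"
  shows "height A le \<ge> 1"
proof -
  obtain k where k: "x \<in> level A le k" using in_some_level[OF assms(1,2)] by auto
  have "k \<noteq> 0"
  proof
    assume "k = 0" with k have "x \<in> minimals A le" by (simp add: level_0)
    with assms(3) show False by simp
  qed
  then show ?thesis using height_ge[OF assms(1) k] by simp
qed



locale core =
  fixes P :: "'a set" and le :: "'a \<Rightarrow> 'a \<Rightarrow> bool" and r :: "'a \<Rightarrow> 'a"
    and L0 L1 M :: "'a set"
  assumes po: "is_poset P le"
  and PU: "P = L0 \<union> L1 \<union> M"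
  and d01: "L0 \<inter> L1 = {}" and d0M: "L0 \<inter> M = {}" and d1M: "L1 \<inter> M = {}"
  and L0min: "\<And>x y. x \<in> L0 \<Longrightarrow> y \<in> P \<Longrightarrow> le y x \<Longrightarrow> y = x"
  and cL0: "card L0 = 3"
  and L1anti: "\<And>x y. x \<in> L1 \<Longrightarrow> y \<in> L1 \<Longrightarrow> le x y \<Longrightarrow> x = y"
  and L1up: "\<And>y. y \<in> L1 \<Longrightarrow> \<exists>x1 x2. x1 \<in> L0 \<and> x2 \<in> L0 \<and> x1 \<noteq> x2 \<and> le x1 y \<and> le x2 y"
  and Mup: "\<And>z x. z \<in> M \<Longrightarrow> x \<in> L0 \<Longrightarrow> le x z"
  and Mne: "M \<noteq> {}"
  and ret: "retraction P le r"
  and R0c: "card (minimals (r ` P) le) = 2"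
begin

abbreviation "R \<equiv> r ` P"
abbreviation "R0 \<equiv> minimals (r ` P) le"

lemma rP: "x \<in> P \<Longrightarrow> r x \<in> P" using ret unfolding retraction_def by auto
lemma rmono: "x \<in> P \<Longrightarrow> y \<in> P \<Longrightarrow> le x y \<Longrightarrow> le (r x) (r y)"
  using ret unfolding retraction_def order_preserving_def by auto
lemma ridem: "x \<in> P \<Longrightarrow> r (r x) = r x" using ret unfolding retraction_def by auto
lemma RP: "y \<in> R \<Longrightarrow> y \<in> P" using rP by auto
lemma Rfix: "y \<in> R \<Longrightarrow> r y = y" using ridem by auto
lemma R0R: "m \<in> R0 \<Longrightarrow> m \<in> R" unfolding minimals_iff by auto
lemma min_R0: "u \<in> R \<Longrightarrow> m \<in> R0 \<Longrightarrow> le u m \<Longrightarrow> u = m"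
  unfolding minimals_iff by auto
lemma K: "x \<in> P \<Longrightarrow> m \<in> R0 \<Longrightarrow> le (r x) m \<Longrightarrow> r x = m"
  using min_R0 by auto
lemma trans': "x \<in> P \<Longrightarrow> y \<in> P \<Longrightarrow> z \<in> P \<Longrightarrow> le x y \<Longrightarrow> le y z \<Longrightarrow> le x z"
  using po_trans[OF po] by blast
lemma refl': "x \<in> P \<Longrightarrow> le x x" using po_refl[OF po] by blast
lemma finL0: "finite L0" using cL0 card.infinite by fastforce
lemma L0P: "x \<in> L0 \<Longrightarrow> x \<in> P" using PU by auto
lemma L1P: "x \<in> L1 \<Longrightarrow> x \<in> P" using PU by auto
lemma MP: "x \<in> M \<Longrightarrow> x \<in> P" using PU by auto
lemma below_to: "x \<in> P \<Longrightarrow> m \<in> R0 \<Longrightarrow> le x m \<Longrightarrow> r x = m"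
proof -
  assume a: "x \<in> P" "m \<in> R0" "le x m"
  have "m \<in> P" using R0R RP a(2) by blast
  then have "le (r x) (r m)" using rmono a by blast
  moreover have "r m = m" using Rfix R0R a(2) by blast
  ultimately show ?thesis using K a by auto
qed

lemma R0_sub:
  assumes m: "m \<in> R0" and m': "m' \<in> R0" and ne: "m \<noteq> m'"
  shows "m \<in> L0 \<union> L1"
proof (rule ccontr)
  assume "m \<notin> L0 \<union> L1"
  then have mM: "m \<in> M" using PU RP R0R m by blast
  have allm: "r x = m" if "x \<in> L0" for x
    using below_to[OF L0P[OF that] m Mup[OF mM that]] .
  have "m' \<in> P" using RP R0R m' by blast
  then consider "m' \<in> L0" | "m' \<in> L1" | "m' \<in> M" using PU by blast
  then show False
  proof cases
    case 1
    then have "r m' = m" using allm by blast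
    moreover have "r m' = m'" using Rfix R0R m' by blast
    ultimately show False using ne by simp
  next
    case 2
    then obtain x1 where x1: "x1 \<in> L0" "le x1 m'" using L1up by blast
    have "r x1 = m'" using below_to[OF L0P[OF x1(1)] m' x1(2)] .
    then show False using allm[OF x1(1)] ne by simp
  next
    case 3
    obtain x where "x \<in> L0" using cL0 by fastforce
    then show False using allm below_to[OF L0P[OF \<open>x\<in>L0\<close>] m' Mup[OF 3 \<open>x\<in>L0\<close>]] ne by simp
  qed
qed

lemma L0_three: obtains p q t where "L0 = {p,q,t}" "p \<noteq> q" "q \<noteq> t" "p \<noteq> t"
  using cL0 card_3_iff by metis

lemma share:
  assumes "x1 \<in> L0" "x2 \<in> L0" "x1 \<noteq> x2" "y1 \<in> L0" "y2 \<in> L0" "y1 \<noteq> y2"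
  shows "x1 = y1 \<or> x1 = y2 \<or> x2 = y1 \<or> x2 = y2"
proof -
  obtain p q t where "L0 = {p,q,t}" "p \<noteq> q" "q \<noteq> t" "p \<noteq> t" using L0_three by blast
  then show ?thesis using assms by auto
qed

lemma R0_not_both_L1:
  assumes m: "m \<in> R0" and m': "m' \<in> R0" and ne: "m \<noteq> m'" and "m \<in> L1" "m' \<in> L1"
  shows False
proof -
  obtain x1 x2 where x: "x1 \<in> L0" "x2 \<in> L0" "x1 \<noteq> x2" "le x1 m" "le x2 m" using L1up assms(4) by blast
  obtain y1 y2 where y: "y1 \<in> L0" "y2 \<in> L0" "y1 \<noteq> y2" "le y1 m'" "le y2 m'" using L1up assms(5) by blast
  have rx: "r x1 = m" "r x2 = m" using below_to L0P x m by blast+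
  have ry: "r y1 = m'" "r y2 = m'" using below_to L0P y m' by blast+
  show False using share[OF x(1-3) y(1-3)] rx ry ne by auto
qed

lemma caseB:
  assumes a: "a \<in> R0" and b: "b \<in> R0" and ab: "a \<noteq> b" and aL0: "a \<in> L0" and bL1: "b \<in> L1"
    and R0ab: "R0 = {a,b}"
  shows "R \<noteq> R0 \<and> retraction M le r \<and> r ` M = R - R0"
    and "\<exists>s. retraction P le s \<and> order_iso (s ` P) le R le \<and> minimals (s ` P) le \<subseteq> L0
            \<and> s ` L0 = minimals (s ` P) le \<and> (\<exists>p\<in>minimals (s ` P) le. {x\<in>P. s x = p} = {p})"
proof -
  have aR: "a \<in> R" and bR: "b \<in> R" using R0R[OF a] R0R[OF b] by auto
  have aP: "a \<in> P" and bP: "b \<in> P" using RP[OF aR] RP[OF bR] by auto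
  have ra: "r a = a" and rb: "r b = b" using Rfix[OF aR] Rfix[OF bR] by auto
  have nab: "\<not> le a b" using min_R0[OF aR b] ab by blast
  have nba: "\<not> le b a" using min_R0[OF bR a] ab by blast
  obtain x1 x2 where x: "x1 \<in> L0" "x2 \<in> L0" "x1 \<noteq> x2" "le x1 b" "le x2 b" using L1up bL1 by blast
  have x1a: "x1 \<noteq> a" using x(4) nab by blast
  have x2a: "x2 \<noteq> a" using x(5) nab by blast
  have L0eq: "L0 = {a,x1,x2}"
  proof -
    have sub: "{a,x1,x2} \<subseteq> L0" using aL0 x by auto
    have "card {a,x1,x2} = 3" using x1a x2a x(3) by auto
    then show ?thesis using card_subset_eq[OF finL0 sub] cL0 by simp
  qed
  have rx1: "r x1 = b" using below_to[OF L0P[OF x(1)] b x(4)] .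
  have rx2: "r x2 = b" using below_to[OF L0P[OF x(2)] b x(5)] .
  have x1b: "x1 \<noteq> b" using x(1) bL1 d01 by blast
  have Mab: "le a (r z) \<and> le b (r z)" if "z \<in> M" for z
  proof -
    have "le (r a) (r z)" using rmono[OF aP MP[OF that] Mup[OF that aL0]] .
    moreover have "le (r x1) (r z)" using rmono[OF L0P[OF x(1)] MP[OF that] Mup[OF that x(1)]] .
    ultimately show ?thesis using ra rx1 by simp
  qed
  have MnR0: "r z \<noteq> a \<and> r z \<noteq> b" if "z \<in> M" for z
    using Mab[OF that] nab nba by auto
  have L1b: "le b (r y)" if yL: "y \<in> L1" for y
  proof -
    obtain y1 y2 where y: "y1 \<in> L0" "y2 \<in> L0" "y1 \<noteq> y2" "le y1 y" "le y2 y" using L1up[OF yL] by blast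
    have "y1 \<in> {x1,x2} \<or> y2 \<in> {x1,x2}" using y L0eq by auto
    then obtain w where w: "w \<in> {x1,x2}" "le w y" using y by blast
    have "r w = b" using w rx1 rx2 by auto
    moreover have "w \<in> P" using w x L0P by auto
    ultimately show ?thesis using rmono[OF _ L1P[OF yL] w(2)] by auto
  qed
  have RinM: "y \<in> M" if H: "y \<in> R" "y \<noteq> a" "y \<noteq> b" for y
  proof -
    have yP: "y \<in> P" using RP[OF H(1)] by blast
    have ry: "r y = y" using Rfix[OF H(1)] by blast
    consider "y \<in> L0" | "y \<in> L1" | "y \<in> M" using PU yP by blast
    then show ?thesis
    proof cases
      case 1
      then have "y = x1 \<or> y = x2" using L0eq H by auto
      then have "r y = b" using rx1 rx2 by auto
      then show ?thesis using ry H by auto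
    next
      case 2
      then have "le b y" using L1b ry by metis
      then have "b = y" using L1anti[OF bL1 2] by blast
      then show ?thesis using H by auto
    qed
  qed
  obtain z where zM: "z \<in> M" using Mne by blast
  have rzR: "r z \<in> R" using MP[OF zM] by blast
  have 1: "R \<noteq> R0" using rzR MnR0[OF zM] R0ab by auto
  have rM: "r ` M = R - R0"
  proof
    show "r ` M \<subseteq> R - R0" using MnR0 MP R0ab by auto
    show "R - R0 \<subseteq> r ` M"
    proof
      fix y assume y: "y \<in> R - R0"
      then have "y \<in> M" using RinM R0ab by auto
      moreover have "r y = y" using Rfix y by blast
      ultimately show "y \<in> r ` M" by (metis image_eqI)
    qed
  qed
  have 2: "retraction M le r"
    unfolding retraction_def order_preserving_def
  proof (intro conjI ballI impI)
    show "r ` M \<subseteq> M" using rM RinM R0ab by auto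
    fix x y assume "x \<in> M" "y \<in> M" "le x y"
    then show "le (r x) (r y)" using rmono MP by blast
  next
    fix x assume "x \<in> M" then show "r (r x) = r x" using ridem MP by blast
  qed
  show "R \<noteq> R0 \<and> retraction M le r \<and> r ` M = R - R0" using 1 2 rM by blast
  have Va: "x = a" if H: "x \<in> P" "r x = a" for x
  proof -
    consider "x \<in> L0" | "x \<in> L1" | "x \<in> M" using PU H by blast
    then show ?thesis
    proof cases
      case 1
      then have "x = a \<or> x = x1 \<or> x = x2" using L0eq by auto
      then show ?thesis using rx1 rx2 H ab by auto
    next
      case 2 then show ?thesis using L1b[OF 2] H nba by auto
    next
      case 3 then show ?thesis using MnR0 H by auto
    qed
  qed
  define s where "s = (\<lambda>x. if x = a then a else if r x = b then x1 else r x)"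
  have x1P: "x1 \<in> P" using L0P x(1) by blast
  have sa: "s a = a" unfolding s_def by simp
  have sx1: "s x1 = x1" unfolding s_def using x1a rx1 by simp
  have RR0M: "u \<in> M" if H: "u \<in> R - R0" for u using RinM[of u] H R0ab by auto
  have sS: "s ` P = insert a (insert x1 (R - R0))"
  proof
    show "s ` P \<subseteq> insert a (insert x1 (R - R0))"
    proof
      fix y assume "y \<in> s ` P"
      then obtain x where x: "x \<in> P" "y = s x" by blast
      show "y \<in> insert a (insert x1 (R - R0))"
      proof (cases "x = a")
        case True then show ?thesis using x sa by simp
      next
        case False
        then have "r x \<noteq> a" using Va x(1) by blast
        then show ?thesis using x False R0ab unfolding s_def by auto
      qed
    qed
    show "insert a (insert x1 (R - R0)) \<subseteq> s ` P"
    proof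
      fix y assume y: "y \<in> insert a (insert x1 (R - R0))"
      consider "y = a" | "y = x1" | "y \<in> R - R0" using y by blast
      then show "y \<in> s ` P"
      proof cases
        case 1 then show ?thesis using sa aP by (metis image_eqI)
      next
        case 2 then show ?thesis using sx1 x1P by (metis image_eqI)
      next
        case 3
        have ry: "r y = y" using Rfix[of y] 3 by blast
        then have "s y = y" unfolding s_def using 3 R0ab by auto
        moreover have "y \<in> P" using 3 RP[of y] by blast
        ultimately show ?thesis by (metis image_eqI)
      qed
    qed
  qed
  have uM: "u \<in> M" "u \<in> P" "le x1 u" "le a u" "le b u" "\<not> le u x1" "\<not> le u a" "\<not> le u b"
    if "u \<in> R - R0" for u
  proof -
    show um: "u \<in> M" using RR0M that .
    show uP: "u \<in> P" using MP um .
    show "le x1 u" using Mup um x(1) .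
    show "le a u" using Mup um aL0 .
    have "r u = u" using Rfix[of u] that by blast
    then show "le b u" using Mab[OF um] by simp
    show "\<not> le u x1" using L0min[OF x(1) uP] um x(1) d0M by auto
    show "\<not> le u a" using L0min[OF aL0 uP] um aL0 d0M by auto
    show "\<not> le u b"
    proof
      assume "le u b" then have "u = b" using min_R0[OF _ b, of u] that by blast
      then show False using that b by blast
    qed
  qed
  have nax1: "\<not> le a x1" "\<not> le x1 a"
  proof
    assume "le a x1" then show False using L0min[OF x(1) aP] x1a by simp
  next
    show "\<not> le x1 a"
    proof
      assume "le x1 a" then show False using L0min[OF aL0 x1P] x1a by simp
    qed
  qed
  have bnR: "b \<notin> R - R0" "a \<notin> R - R0" using a b by auto
  have ret_s: "retraction P le s"
    unfolding retraction_def order_preserving_def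
  proof (intro conjI ballI impI)
    show "s ` P \<subseteq> P"
    proof
      fix y assume "y \<in> s ` P"
      then have "y = a \<or> y = x1 \<or> y \<in> R - R0" unfolding sS by blast
      then show "y \<in> P" using aP x1P uM(2)[of y] by blast
    qed
  next
    fix x assume xP: "x \<in> P"
    show "s (s x) = s x"
    proof (cases "x = a")
      case True then show ?thesis using sa by simp
    next
      case False
      show ?thesis
      proof (cases "r x = b")
        case True
        have "s x = x1" unfolding s_def using False True by simp
        then show ?thesis using sx1 by simp
      next
        case F2: False
        have "r x \<noteq> a" using Va xP False by blast
        then show ?thesis using False F2 ridem[OF xP] unfolding s_def by simp
      qed
    qed
  next
    fix x y assume xP: "x \<in> P" and yP: "y \<in> P" and xy: "le x y"
    have rxy: "le (r x) (r y)" using rmono xP yP xy by blast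
    have rxR: "r x \<in> R" "r y \<in> R" using xP yP by auto
    show "le (s x) (s y)"
    proof (cases "x = a")
      case True
      show ?thesis
      proof (cases "y = a")
        case True then show ?thesis using \<open>x = a\<close> refl' aP sa by simp
      next
        case False
        have "r y \<noteq> a" using Va yP False by blast
        moreover have "r y \<noteq> b" using rxy True ra nab by auto
        ultimately show ?thesis using True False rxy ra unfolding s_def by simp
      qed
    next
      case xa: False
      have ya: "y \<noteq> a" using L0min[OF aL0 xP] xy xa by blast
      have rya: "r y \<noteq> a" using Va yP ya by blast
      have rxa: "r x \<noteq> a" using Va xP xa by blast
      show ?thesis
      proof (cases "r x = b")
        case True
        show ?thesis
        proof (cases "r y = b")
          case True then show ?thesis using xa ya \<open>r x = b\<close> refl' x1P unfolding s_def by simp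
        next
          case False
          have "r y \<in> R - R0" using rxR rya False R0ab by auto
          then show ?thesis using uM(3) xa ya True False unfolding s_def by simp
        qed
      next
        case False
        have "r y \<noteq> b"
        proof
          assume "r y = b" then have "r x = b" using K[OF xP b] rxy by simp
          then show False using False by simp
        qed
        then show ?thesis using xa ya False rxy unfolding s_def by simp
      qed
    qed
  qed
  have minS: "minimals (s ` P) le = {a, x1}"
  proof
    show "minimals (s ` P) le \<subseteq> {a, x1}"
    proof
      fix y assume y: "y \<in> minimals (s ` P) le"
      then have yS: "y \<in> insert a (insert x1 (R - R0))" using sS minimals_iff by metis
      show "y \<in> {a, x1}"
      proof (rule ccontr)
        assume "y \<notin> {a, x1}"
        then have yu: "y \<in> R - R0" using yS by auto
        have "a \<in> s ` P" using sS by auto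
        then have "a = y" using y uM(4)[OF yu] unfolding minimals_iff by blast
        then show False using \<open>y \<notin> {a, x1}\<close> by simp
      qed
    qed
    show "{a, x1} \<subseteq> minimals (s ` P) le"
    proof -
      have "a \<in> minimals (s ` P) le" unfolding minimals_iff
        using sS L0min[OF aL0] ret_s unfolding retraction_def by auto
      moreover have "x1 \<in> minimals (s ` P) le" unfolding minimals_iff
        using sS L0min[OF x(1)] ret_s unfolding retraction_def by auto
      ultimately show ?thesis by simp
    qed
  qed
  have sL0: "s ` L0 = {a, x1}"
  proof -
    have "s x2 = x1" unfolding s_def using x2a rx2 by simp
    then show ?thesis using L0eq sa sx1 by auto
  qed
  have fib: "{x\<in>P. s x = a} = {a}"
  proof
    show "{x\<in>P. s x = a} \<subseteq> {a}"
    proof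
      fix x assume x': "x \<in> {x\<in>P. s x = a}"
      show "x \<in> {a}"
      proof (rule ccontr)
        assume "x \<notin> {a}"
        then have "x \<noteq> a" by simp
        then have "r x \<noteq> a" using Va x' by blast
        then show False using x' \<open>x \<noteq> a\<close> x1a unfolding s_def by (auto split: if_splits)
      qed
    qed
    show "{a} \<subseteq> {x\<in>P. s x = a}" using aP sa by auto
  qed
  define f where "f = (\<lambda>y. if y = x1 then b else y)"
  have iso: "order_iso (s ` P) le R le"
    unfolding order_iso_def
  proof (intro exI conjI)
    show "bij_betw f (s ` P) R"
      unfolding bij_betw_def
    proof
      show "inj_on f (s ` P)" unfolding inj_on_def sS f_def using bnR x1a ab by auto
      show "f ` s ` P = R"
      proof
        show "f ` s ` P \<subseteq> R" unfolding sS f_def using aR bR x1a by auto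
        show "R \<subseteq> f ` s ` P"
        proof
          fix y assume yR: "y \<in> R"
          have "y = a \<or> y = b \<or> y \<in> R - R0" using yR R0ab by auto
          moreover have "f a = a" "f x1 = b" unfolding f_def using x1a by auto
          moreover have "f u = u" if uu: "u \<in> R - R0" for u unfolding f_def using uM(6)[OF uu] refl' x1P by auto
          moreover have "a \<in> s ` P" "x1 \<in> s ` P" using sS by auto
          moreover have "u \<in> s ` P" if uu: "u \<in> R - R0" for u using sS uu by auto
          ultimately show "y \<in> f ` s ` P" by (metis rev_image_eqI)
        qed
      qed
    qed
    show "\<forall>x\<in>s ` P. \<forall>y\<in>s ` P. le x y = le (f x) (f y)"
    proof (intro ballI)
      fix x y assume "x \<in> s ` P" "y \<in> s ` P"
      then have xS: "x = a \<or> x = x1 \<or> x \<in> R - R0" and yS: "y = a \<or> y = x1 \<or> y \<in> R - R0"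
        using sS by auto
      have fx1: "f x1 = b" and fo: "\<And>u. u \<noteq> x1 \<Longrightarrow> f u = u" unfolding f_def by auto
      have x1u: "x1 \<notin> R - R0" using uM(6) refl' x1P by blast
      have bb: "le b b" "le x1 x1" "le a a" using refl' bP x1P aP by auto
      have fa: "f a = a" using fo x1a by auto
      have fu: "f u = u" if uu: "u \<in> R - R0" for u
      proof -
        have "u \<noteq> x1" using x1u uu by blast
        then show ?thesis using fo by blast
      qed
      have ufacts: "le x1 u" "le b u" "\<not> le u x1" "\<not> le u b" if uu: "u \<in> R - R0" for u
        using uM(3,5,6,8)[OF uu] by auto
      show "le x y = le (f x) (f y)"
        using xS yS
      proof (elim disjE)
      qed (simp_all add: fa fx1 fu ufacts nax1 nab nba bb)
    qed
  qed
  show "\<exists>s. retraction P le s \<and> order_iso (s ` P) le R le \<and> minimals (s ` P) le \<subseteq> L0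
            \<and> s ` L0 = minimals (s ` P) le \<and> (\<exists>p\<in>minimals (s ` P) le. {x\<in>P. s x = p} = {p})"
    using ret_s iso minS sL0 fib aL0 x(1) by (intro exI[of _ s]) auto
qed

lemma caseA:
  assumes a: "a \<in> R0" and b: "b \<in> R0" and ab: "a \<noteq> b" and aL0: "a \<in> L0" and bL0: "b \<in> L0"
    and R0ab: "R0 = {a,b}" and cL: "c \<in> L0" "c \<noteq> a" "c \<noteq> b" and arc: "le a (r c)"
  shows "\<exists>s. retraction P le s \<and> order_iso (s ` P) le R le \<and> minimals (s ` P) le \<subseteq> L0
            \<and> s ` L0 = minimals (s ` P) le \<and> (\<exists>p\<in>minimals (s ` P) le. {x\<in>P. s x = p} = {p})"
proof -
  have aR: "a \<in> R" and bR: "b \<in> R" using R0R[OF a] R0R[OF b] by auto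
  have aP: "a \<in> P" and bP: "b \<in> P" using RP[OF aR] RP[OF bR] by auto
  have ra: "r a = a" and rb: "r b = b" using Rfix[OF aR] Rfix[OF bR] by auto
  have nab: "\<not> le a b" using min_R0[OF aR b] ab by blast
  have cP: "c \<in> P" using L0P[OF cL(1)] .
  have L0eq: "L0 = {a,b,c}"
  proof -
    have sub: "{a,b,c} \<subseteq> L0" using aL0 bL0 cL by auto
    have "card {a,b,c} = 3" using ab cL by auto
    then show ?thesis using card_subset_eq[OF finL0 sub] cL0 by simp
  qed
  have cnR: "c \<notin> R"
  proof
    assume cR: "c \<in> R"
    have "c \<in> R0" unfolding minimals_iff
    proof (intro conjI ballI impI)
      show "c \<in> R" using cR .
      fix y assume "y \<in> R" "le y c"
      then show "y = c" using L0min[OF cL(1) RP[of y]] by blast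
    qed
    then show False using R0ab cL by auto
  qed
  define s where "s = r(c := a)"
  have sc: "s c = a" unfolding s_def by simp
  have so: "s x = r x" if "x \<noteq> c" for x unfolding s_def using that by simp
  have rc: "r c \<in> R" "r c \<in> P" using cP rP by auto
  have ret_s: "retraction P le s"
    unfolding retraction_def order_preserving_def
  proof (intro conjI ballI impI)
    show "s ` P \<subseteq> P"
    proof
      fix y assume "y \<in> s ` P"
      then obtain x where x: "x \<in> P" "y = s x" by blast
      show "y \<in> P" using x sc so[of x] aP rP[OF x(1)] by (cases "x = c") auto
    qed
  next
    fix x assume xP: "x \<in> P"
    show "s (s x) = s x"
    proof (cases "x = c")
      case True then show ?thesis using sc so[of a] cL ra by simp
    next
      case False
      have "r x \<noteq> c" using cnR xP by blast
      then show ?thesis using so[OF False] so[of "r x"] ridem[OF xP] by simp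
    qed
  next
    fix x y assume xP: "x \<in> P" and yP: "y \<in> P" and xy: "le x y"
    have rxy: "le (r x) (r y)" using rmono xP yP xy by blast
    show "le (s x) (s y)"
    proof (cases "x = c")
      case True
      show ?thesis
      proof (cases "y = c")
        case True then show ?thesis using \<open>x = c\<close> sc refl' aP by simp
      next
        case False
        have "le a (r y)" using trans'[OF aP rc(2) rP[OF yP] arc] rxy True by simp
        then show ?thesis using True False sc so by simp
      qed
    next
      case xc: False
      have yc: "y \<noteq> c" using L0min[OF cL(1) xP] xy xc by blast
      then show ?thesis using xc so rxy by simp
    qed
  qed
  have sP: "s ` P = R"
  proof
    show "s ` P \<subseteq> R"
    proof
      fix y assume "y \<in> s ` P"
      then obtain x where x: "x \<in> P" "y = s x" by blast
      show "y \<in> R" using x sc so[of x] aR by (cases "x = c") auto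
    qed
    show "R \<subseteq> s ` P"
    proof
      fix y assume yR: "y \<in> R"
      have "y \<noteq> c" using yR cnR by blast
      then have "s y = y" using so Rfix[OF yR] by simp
      then show "y \<in> s ` P" using RP[OF yR] by (metis rev_image_eqI)
    qed
  qed
  have fib: "{x\<in>P. s x = b} = {b}"
  proof
    show "{x\<in>P. s x = b} \<subseteq> {b}"
    proof
      fix x assume x': "x \<in> {x\<in>P. s x = b}"
      then have xP: "x \<in> P" and sx: "s x = b" by auto
      have xc: "x \<noteq> c" using sx sc ab by auto
      then have rx: "r x = b" using sx so by simp
      consider "x \<in> L0" | "x \<in> L1" | "x \<in> M" using PU xP by blast
      then show "x \<in> {b}"
      proof cases
        case 1
        then have "x = a \<or> x = b" using L0eq xc by auto
        then show ?thesis using rx ra ab by auto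
      next
        case 2
        obtain y1 y2 where y: "y1 \<in> L0" "y2 \<in> L0" "y1 \<noteq> y2" "le y1 x" "le y2 x" using L1up[OF 2] by blast
        have "y1 \<in> {a,c} \<or> y2 \<in> {a,c}" using y L0eq by auto
        then obtain w where w: "w \<in> {a,c}" "le w x" using y by blast
        have wP: "w \<in> P" using w aP cP by auto
        have "le (r w) b" using rmono[OF wP xP w(2)] rx by simp
        moreover have "le a (r w)" using w ra arc refl' aP by auto
        ultimately have "le a b" using trans'[OF aP rP[OF wP] bP] by blast
        then show ?thesis using nab by simp
      next
        case 3
        have "le (r a) (r x)" using rmono[OF aP xP Mup[OF 3 aL0]] .
        then show ?thesis using ra rx nab by simp
      qed
    qed
    show "{b} \<subseteq> {x\<in>P. s x = b}" using bP so[of b] cL rb by auto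
  qed
  have sL0: "s ` L0 = R0"
    using L0eq R0ab sc so[of a] so[of b] cL ra rb by auto
  show ?thesis
  proof (intro exI[of _ s] conjI)
    show "retraction P le s" using ret_s .
    show "order_iso (s ` P) le R le" unfolding sP order_iso_def
      by (intro exI[of _ id]) (simp add: bij_betw_def)
    show "minimals (s ` P) le \<subseteq> L0" unfolding sP using R0ab aL0 bL0 by auto
    show "s ` L0 = minimals (s ` P) le" unfolding sP using sL0 .
    show "\<exists>p\<in>minimals (s ` P) le. {x\<in>P. s x = p} = {p}" unfolding sP using fib b by blast
  qed
qed

lemma main:
  shows "(R0 \<subseteq> L0 \<union> L1 \<and> R0 \<inter> L0 \<noteq> {}
          \<and> (R0 \<inter> L1 \<noteq> {} \<longrightarrow> R \<noteq> R0 \<and> retraction M le r \<and> r ` M = R - R0))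
       \<and> (\<exists>s. retraction P le s \<and> order_iso (s ` P) le R le \<and> minimals (s ` P) le \<subseteq> L0
            \<and> s ` L0 = minimals (s ` P) le \<and> (\<exists>p\<in>minimals (s ` P) le. {x\<in>P. s x = p} = {p}))"
proof -
  obtain a b where R0ab: "R0 = {a,b}" and ab: "a \<noteq> b" using R0c card_2_iff by metis
  have a: "a \<in> R0" and b: "b \<in> R0" using R0ab by auto
  have aL: "a \<in> L0 \<union> L1" using R0_sub[OF a b ab] .
  have bL: "b \<in> L0 \<union> L1" using R0_sub[OF b a] ab by auto
  have sub: "R0 \<subseteq> L0 \<union> L1" using aL bL R0ab by auto
  have ne: "R0 \<inter> L0 \<noteq> {}"
  proof
    assume "R0 \<inter> L0 = {}"
    then have "a \<in> L1" "b \<in> L1" using aL bL a b by auto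
    then show False using R0_not_both_L1[OF a b ab] by blast
  qed
  consider "a \<in> L0" "b \<in> L0" | "a \<in> L0" "b \<in> L1" | "a \<in> L1" "b \<in> L0"
    using aL bL ne R0ab by auto
  then show ?thesis
  proof cases
    case 1
    have "L0 - {a,b} \<noteq> {}"
    proof
      assume "L0 - {a,b} = {}"
      then have "L0 \<subseteq> {a,b}" by blast
      then have "card L0 \<le> card {a,b}" by (intro card_mono) auto
      moreover have "card {a,b} = 2" using ab by simp
      ultimately show False using cL0 by simp
    qed
    then obtain c where cL: "c \<in> L0" "c \<noteq> a" "c \<noteq> b" by blast
    have Rpo: "is_poset R le" by (rule poset_subset[OF po]) (use rP in auto)
    have "r c \<in> R" using L0P[OF cL(1)] by blast
    then obtain m where m: "m \<in> R0" "le m (r c)" using ex_min_below[OF Rpo] by blast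
    have part2: "\<exists>s. retraction P le s \<and> order_iso (s ` P) le R le \<and> minimals (s ` P) le \<subseteq> L0
            \<and> s ` L0 = minimals (s ` P) le \<and> (\<exists>p\<in>minimals (s ` P) le. {x\<in>P. s x = p} = {p})"
    proof (cases "m = a")
      case True
      then show ?thesis using caseA[OF a b ab 1 R0ab cL] m by blast
    next
      case False
      then have "m = b" using m R0ab by auto
      moreover have "R0 = {b,a}" using R0ab by auto
      ultimately show ?thesis using caseA[OF b a ab[symmetric] 1(2) 1(1) _ cL(1,3,2)] m by blast
    qed
    have "R0 \<inter> L1 = {}" using 1 R0ab d01 by auto
    then show ?thesis using sub ne part2 by blast
  next
    case 2
    show ?thesis using caseB[OF a b ab 2 R0ab] sub ne by blast
  next
    case 3
    have R0ba: "R0 = {b,a}" using R0ab by auto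
    show ?thesis using caseB[OF b a ab[symmetric] 3(2) 3(1) R0ba] sub ne by blast
  qed
qed

end


lemma s3_po: "section3 h le \<Longrightarrow> is_poset (sec_carrier h) le" unfolding section3_def by blast
lemma s3_h: "section3 h le \<Longrightarrow> h \<ge> 1" unfolding section3_def by blast
lemma s3_step: "section3 h le \<Longrightarrow> j < 3 \<Longrightarrow> k < h \<Longrightarrow> strict le (k, j) (Suc k, j)"
  unfolding section3_def by blast
lemma s3_anti: "section3 h le \<Longrightarrow> k \<le> h \<Longrightarrow> antichain le {(k,0), (k,1), (k,2)}"
  unfolding section3_def by blast
lemma s3_rot: "section3 h le \<Longrightarrow> k \<le> h \<Longrightarrow> l \<le> h \<Longrightarrow> i < 3 \<Longrightarrow> j < 3 \<Longrightarrow> strict le (k, i) (l, j)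
            \<Longrightarrow> strict le (k, (i + 1) mod 3) (l, (j + 1) mod 3)"
  unfolding section3_def by blast

lemma antichainD: "antichain le S \<Longrightarrow> x \<in> S \<Longrightarrow> y \<in> S \<Longrightarrow> le x y \<Longrightarrow> x = y"
  unfolding antichain_def by blast

lemma sc_mem: "(k,j) \<in> sec_carrier h \<longleftrightarrow> k \<le> h \<and> j < 3" unfolding sec_carrier_def by auto

lemma col:
  assumes s: "section3 h le" and "k < l" "l \<le> h" "j < 3"
  shows "strict le (k,j) (l,j)"
  using assms(2,3)
proof (induction l)
  case 0 then show ?case by simp
next
  case (Suc l)
  have st: "strict le (l,j) (Suc l, j)" using s3_step[OF s assms(4)] Suc.prems by simp
  show ?case
  proof (cases "k = l")
    case True then show ?thesis using st by simp
  next
    case False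
    then have "strict le (k,j) (l,j)" using Suc by simp
    then have "le (k,j) (Suc l, j)"
      using po_trans[OF s3_po[OF s], of "(k,j)" "(l,j)" "(Suc l, j)"] st Suc.prems assms(4)
      unfolding strict_def by (simp add: sc_mem)
    then show ?thesis unfolding strict_def using Suc.prems by simp
  qed
qed

lemma up:
  assumes s: "section3 h le" and "k \<le> h" "l \<le> h" "i < 3" "j < 3" and st: "strict le (k,i) (l,j)"
  shows "k < l"
proof (rule ccontr)
  assume "\<not> k < l"
  then have lk: "l \<le> k" by simp
  have po: "is_poset (sec_carrier h) le" using s3_po[OF s] .
  have A: "antichain le {(k,0), (k,1), (k,2)}" using s3_anti[OF s assms(2)] .
  have mem: "(k,i) \<in> {(k,0), (k,1), (k,2)}" "(k,j) \<in> {(k,0), (k,1), (k,2)}" using assms(4,5) by auto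
  show False
  proof (cases "l = k")
    case True
    then have "le (k,i) (k,j)" using st unfolding strict_def by simp
    then have "(k,i) = (k,j)" by (rule antichainD[OF A mem(1) mem(2)])
    then show False using st True unfolding strict_def by simp
  next
    case False
    then have "l < k" using lk by simp
    then have c: "le (l,j) (k,j)" using col[OF s _ assms(2,5)] unfolding strict_def by blast
    have "le (k,i) (k,j)" using po_trans[OF po, of "(k,i)" "(l,j)" "(k,j)"] st c assms
      unfolding strict_def by (simp add: sc_mem)
    then have "(k,i) = (k,j)" by (rule antichainD[OF A mem(1) mem(2)])
    then have ij: "i = j" by simp
    have "(k,i) = (l,j)" using po_antisym[OF po, of "(k,i)" "(l,j)"] st c ij assms
      unfolding strict_def by (simp add: sc_mem)
    then show False using st unfolding strict_def by simp
  qed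
qed

lemma minimals_blk:
  assumes s: "section3 h le" and n: "n \<le> h"
  shows "minimals ({k..n} \<times> {..<3}) le = (if k \<le> n then {k} \<times> {..<3} else {})"
proof (cases "k \<le> n")
  case False then show ?thesis unfolding minimals_def by auto
next
  case True
  have "minimals ({k..n} \<times> {..<3}) le = {k} \<times> {..<3}"
  proof
    show "minimals ({k..n} \<times> {..<3}) le \<subseteq> {k} \<times> {..<3}"
    proof
      fix x assume x: "x \<in> minimals ({k..n} \<times> {..<3}) le"
      obtain l j where xe: "x = (l,j)" by (cases x)
      have lj: "k \<le> l" "l \<le> n" "j < 3" using x xe unfolding minimals_def by auto
      have "l = k"
      proof (rule ccontr)
        assume "l \<noteq> k"
        then have "strict le (k,j) (l,j)" using col[OF s _ _ lj(3)] lj n by simp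
        moreover have "(k,j) \<in> {k..n} \<times> {..<3}" using True lj by simp
        ultimately show False using x xe unfolding minimals_def by blast
      qed
      then show "x \<in> {k} \<times> {..<3}" using xe lj by simp
    qed
    show "{k} \<times> {..<3} \<subseteq> minimals ({k..n} \<times> {..<3}) le"
    proof
      fix x :: "nat \<times> nat" assume x: "x \<in> {k} \<times> {..<3}"
      then obtain j :: nat where xe: "x = (k,j)" "j < 3" by auto
      have "\<not> strict le y (k,j)" if "y \<in> {k..n} \<times> {..<3}" for y
      proof
        assume st: "strict le y (k,j)"
        obtain l i where ye: "y = (l,i)" by (cases y)
        have yin: "l \<le> h" "k \<le> h" "i < 3" "k \<le> l" using that ye True n by auto
        have "l < k" using up[OF s yin(1,2,3) xe(2)] st ye by simp
        then show False using that ye by auto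
      qed
      then show "x \<in> minimals ({k..n} \<times> {..<3}) le" unfolding minimals_def using xe True by auto
    qed
  qed
  then show ?thesis using True by simp
qed

lemma rest_blk:
  assumes s: "section3 h le" and n: "n \<le> h"
  shows "rest ({..n} \<times> {..<3}) le k = {k..n} \<times> {..<3}"
proof (induction k)
  case 0 then show ?case by auto
next
  case (Suc k)
  show ?case using minimals_blk[OF s n, of k] Suc by auto
qed

lemma level_blk:
  assumes s: "section3 h le" and n: "n \<le> h"
  shows "level ({..n} \<times> {..<3}) le k = (if k \<le> n then {k} \<times> {..<3} else {})"
  unfolding level_def rest_blk[OF s n] using minimals_blk[OF s n] .

lemma height_blk:
  assumes s: "section3 h le" and n: "n \<le> h"
  shows "height ({..n} \<times> {..<3}) le = n"
proof -
  have "level ({..n} \<times> {..<3}) le k \<noteq> {} \<longleftrightarrow> k \<le> n" for k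
  proof (cases "k \<le> n")
    case True
    then have "(k,0) \<in> level ({..n} \<times> {..<3}) le k" using level_blk[OF s n, of k] by simp
    then show ?thesis using True by blast
  next
    case False then show ?thesis using level_blk[OF s n, of k] by simp
  qed
  then have "{k. level ({..n} \<times> {..<3}) le k \<noteq> {}} = {..n}" by auto
  moreover have "Max {..n} = n" by (rule Max_eqI) auto
  ultimately show ?thesis unfolding height_def by simp
qed

lemma lb_blk:
  assumes s: "section3 h le" and n: "n \<le> h"
  shows "levels_between ({..n} \<times> {..<3}) le a b = {a..min b n} \<times> {..<3}"
  unfolding levels_between_def level_blk[OF s n] by auto

lemma rot_iter:
  assumes s: "section3 h le" and "k \<le> h" "l \<le> h" "i < 3" "j < 3" "strict le (k, i) (l, j)"
  shows "strict le (k, (i + t) mod 3) (l, (j + t) mod 3)"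
proof (induction t)
  case 0 then show ?case using assms by simp
next
  case (Suc t)
  have "strict le (k, ((i + t) mod 3 + 1) mod 3) (l, ((j + t) mod 3 + 1) mod 3)"
    using s3_rot[OF s assms(2,3) _ _ Suc] by simp
  then show ?case by (simp add: mod_Suc_eq)
qed



theorem lemma4p4:
  fixes h :: nat and le :: "nat \<times> nat \<Rightarrow> nat \<times> nat \<Rightarrow> bool"
    and r :: "nat \<times> nat \<Rightarrow> nat \<times> nat"
  defines "P \<equiv> lower_segment h le"
  defines "R \<equiv> r ` P"
  assumes Q: "N2 h le"
    and hP: "height P le \<ge> 2"
    and r: "retraction P le r"
    and R0: "card (level R le 0) = 2" "antichain le (level R le 0)"
  shows "(level R le 0 \<subseteq> level P le 0 \<union> level P le 1
          \<and> level R le 0 \<inter> level P le 0 \<noteq> {}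
          \<and> (level R le 0 \<inter> level P le 1 \<noteq> {} \<longrightarrow>
               height R le \<ge> 1
             \<and> is_retract_of (levels_between R le 1 (height R le)) le
                             (levels_between P le 2 (height P le)) le))
       \<and> (\<exists>s. retraction P le s
             \<and> order_iso (s ` P) le R le
             \<and> level (s ` P) le 0 \<subseteq> level P le 0
             \<and> s ` level P le 0 = level (s ` P) le 0
             \<and> (\<exists>p\<in>level (s ` P) le 0. {x\<in>P. s x = p} = {p}))"
proof -
  have s: "section3 h le" and ni: "nice (sec_carrier h) le" and hz: "horizon2 (sec_carrier h) le"
    using Q unfolding N2_def by auto
  have Qe: "sec_carrier h = {..h} \<times> {..<3}" unfolding sec_carrier_def by simp
  define n where "n = h - 1"
  have nh: "n \<le> h" unfolding n_def by simp
  have Pe: "P = {..n} \<times> {..<3}"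
    unfolding P_def lower_segment_def Qe lb_blk[OF s order_refl] n_def by auto
  have hPe: "height P le = n" unfolding Pe using height_blk[OF s nh] .
  have n2: "n \<ge> 2" using hP hPe by simp
  have lP: "level P le k = (if k \<le> n then {k} \<times> {..<3} else {})" for k
    unfolding Pe using level_blk[OF s nh] .
  have lP0: "level P le 0 = {0} \<times> {..<3}" and lP1: "level P le 1 = {1} \<times> {..<3}"
    using lP n2 by auto
  have lb2: "levels_between P le 2 (height P le) = {2..n} \<times> {..<3}"
    unfolding hPe unfolding Pe lb_blk[OF s nh] by simp
  have poQ: "is_poset (sec_carrier h) le" using s3_po[OF s] .
  have poP: "is_poset P le" unfolding Pe by (rule poset_subset[OF poQ]) (use nh in \<open>auto simp: Qe\<close>)
  have hor: "strict le (0,i) (l,j)" if "2 \<le> l" "l \<le> h" "i < 3" "j < 3" for i j l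
  proof -
    have "set_less le (level (sec_carrier h) le 0) (level (sec_carrier h) le l)"
      using hz that unfolding horizon2_def by auto
    moreover have "level (sec_carrier h) le 0 = {0} \<times> {..<3}"
      "level (sec_carrier h) le l = {l} \<times> {..<3}"
      unfolding Qe level_blk[OF s order_refl] using that by auto
    ultimately show ?thesis unfolding set_less_def using that by auto
  qed
  obtain jj where jj: "jj < 3" "jj \<noteq> 0" "strict le (0,jj) (1,0)"
  proof -
    have h1: "1 \<le> h" using s3_h[OF s] .
    have st: "strict le (0,0) (1,0)" using col[OF s _ h1] by simp
    have mem: "(0,0) \<in> sec_carrier h" "(1,0) \<in> sec_carrier h" using h1 by (auto simp: sc_mem)
    have "\<not> ({z \<in> sec_carrier h. strict le z (1,0)} \<subseteq> {z \<in> sec_carrier h. le z (0,0)})"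
      using ni mem st unfolding nice_def by blast
    then obtain z where z: "z \<in> sec_carrier h" "strict le z (1,0)" "\<not> le z (0,0)" by blast
    obtain k j where ze: "z = (k,j)" by (cases z)
    have kj: "k \<le> h" "j < 3" using z(1) ze by (auto simp: sc_mem)
    have "k < 1" using up[OF s kj(1) h1 kj(2), of 0] z(2) ze by simp
    then have "k = 0" by simp
    moreover have "j \<noteq> 0"
    proof
      assume "j = 0" then show False using z(3) ze \<open>k = 0\<close> po_refl[OF poQ mem(1)] by simp
    qed
    ultimately show ?thesis using that kj z ze by auto
  qed
  interpret core P le r "{0::nat} \<times> {..<3::nat}" "{1::nat} \<times> {..<3::nat}" "{2..n} \<times> {..<3::nat}"
  proof
    show "is_poset P le" using poP .
    show "P = {0::nat} \<times> {..<3::nat} \<union> {1::nat} \<times> {..<3::nat} \<union> {2..n} \<times> {..<3::nat}" unfolding Pe using n2 by auto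
    show "{0::nat} \<times> {..<3::nat} \<inter> {1::nat} \<times> {..<3::nat} = {}" by auto
    show "{0::nat} \<times> {..<3::nat} \<inter> {2..n} \<times> {..<3::nat} = {}" by auto
    show "{1::nat} \<times> {..<3::nat} \<inter> {2..n} \<times> {..<3::nat} = {}" by auto
  next
    fix x y assume x: "x \<in> {0::nat} \<times> {..<3::nat}" and y: "y \<in> P" and xy: "le y x"
    show "y = x"
    proof (rule ccontr)
      assume ne: "y \<noteq> x"
      obtain k j where ye: "y = (k,j)" by (cases y)
      obtain i where xe: "x = (0,i)" "i < 3" using x by auto
      have kj: "k \<le> h" "j < 3" using y ye Pe nh by auto
      have "strict le (k,j) (0,i)" using xy ne xe ye unfolding strict_def by simp
      then have "k < 0" using up[OF s kj(1) _ kj(2) xe(2), of 0] by simp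
      then show False by simp
    qed
  next
    show "card ({0::nat} \<times> {..<3::nat}) = 3" by (simp add: card_cartesian_product)
  next
    fix x y assume x: "x \<in> {1::nat} \<times> {..<3::nat}" and y: "y \<in> {1::nat} \<times> {..<3::nat}" and xy: "le x y"
    have A: "antichain le {(1,0), (1,1), (1,2)}" using s3_anti[OF s] n2 nh by simp
    have "x \<in> {(1,0), (1,1), (1,2)}" "y \<in> {(1,0), (1,1), (1,2)}" using x y by auto
    then show "x = y" using antichainD[OF A] xy by blast
  next
    fix y assume y: "y \<in> {1::nat} \<times> {..<3::nat}"
    then obtain i where ye: "y = (1,i)" "i < 3" by auto
    have h1: "1 \<le> h" using nh n2 by simp
    have "strict le (0, (jj + i) mod 3) (1, (0 + i) mod 3)"
      using rot_iter[OF s _ h1 jj(1) _ jj(3)] by simp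
    then have a1: "le (0, (jj + i) mod 3) (1, i)" using ye unfolding strict_def by simp
    have a2: "le (0, i) (1, i)" using col[OF s _ h1 ye(2)] unfolding strict_def by simp
    have "(jj + i) mod 3 \<noteq> i" using jj(1,2) ye(2) by (auto simp: mod_if)
    then show "\<exists>x1 x2. x1 \<in> {0::nat} \<times> {..<3::nat} \<and> x2 \<in> {0::nat} \<times> {..<3::nat} \<and> x1 \<noteq> x2 \<and> le x1 y \<and> le x2 y"
      using a1 a2 ye by (intro exI[of _ "(0, (jj + i) mod 3)"] exI[of _ "(0,i)"]) auto
  next
    fix z x assume z: "z \<in> {2..n} \<times> {..<3::nat}" and x: "x \<in> {0::nat} \<times> {..<3::nat}"
    then obtain l j i where e: "z = (l,j)" "x = (0,i)" "2 \<le> l" "l \<le> n" "j < 3" "i < 3" by auto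
    then show "le x z" using hor[of l i j] nh unfolding strict_def by simp
  next
    have "(2,0) \<in> {2..n} \<times> {..<3::nat}" using n2 by auto
    then show "{2..n} \<times> {..<3::nat} \<noteq> {}" by blast
  next
    show "retraction P le r" using r .
  next
    show "card (minimals (r ` P) le) = 2" using R0(1) unfolding R_def level_0 .
  qed
  have M: "(R0 \<subseteq> {0} \<times> {..<3} \<union> {1} \<times> {..<3} \<and> R0 \<inter> {0} \<times> {..<3} \<noteq> {}
          \<and> (R0 \<inter> {1} \<times> {..<3} \<noteq> {} \<longrightarrow> r ` P \<noteq> R0 \<and> retraction ({2..n} \<times> {..<3}) le r
                  \<and> r ` ({2..n} \<times> {..<3}) = r ` P - R0))
       \<and> (\<exists>s. retraction P le s \<and> order_iso (s ` P) le (r ` P) le \<and> minimals (s ` P) le \<subseteq> {0} \<times> {..<3}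
            \<and> s ` ({0} \<times> {..<3}) = minimals (s ` P) le \<and> (\<exists>p\<in>minimals (s ` P) le. {x\<in>P. s x = p} = {p}))"
    by (rule main)
  have Rpo: "is_poset R le" unfolding R_def by (rule poset_subset[OF poP]) (use rP in auto)
  have part1c: "height R le \<ge> 1 \<and> is_retract_of (levels_between R le 1 (height R le)) le
                   (levels_between P le 2 (height P le)) le"
    if H: "r ` P \<noteq> R0" "retraction ({2..n} \<times> {..<3}) le r" "r ` ({2..n} \<times> {..<3}) = r ` P - R0"
  proof
    obtain x where x: "x \<in> R" "x \<notin> minimals R le" using H(1) R0R unfolding R_def by blast
    show "height R le \<ge> 1" using height_pos[OF Rpo x] .
    have lbR: "levels_between R le 1 (height R le) = R - minimals R le" using levels_between_1[OF Rpo] .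
    show "is_retract_of (levels_between R le 1 (height R le)) le (levels_between P le 2 (height P le)) le"
      unfolding is_retract_of_def lbR lb2
      by (intro exI[of _ r] conjI H(2)) (simp add: H(3) R_def order_iso_def, intro exI[of _ id], simp add: bij_betw_def)
  qed
  have lR: "level R le 0 = R0" unfolding R_def level_0 ..
  note M1 = M[THEN conjunct1, THEN conjunct1]
  note M2 = M[THEN conjunct1, THEN conjunct2, THEN conjunct1]
  note M3 = M[THEN conjunct1, THEN conjunct2, THEN conjunct2, rule_format]
  note M4 = M[THEN conjunct2]
  have C1: "level R le 0 \<subseteq> level P le 0 \<union> level P le 1" unfolding lR lP0 lP1 using M1 .
  have C2: "level R le 0 \<inter> level P le 0 \<noteq> {}" unfolding lR lP0 using M2 .
  have C3: "level R le 0 \<inter> level P le 1 \<noteq> {} \<longrightarrow>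
               height R le \<ge> 1
             \<and> is_retract_of (levels_between R le 1 (height R le)) le
                             (levels_between P le 2 (height P le)) le"
  proof
    assume "level R le 0 \<inter> level P le 1 \<noteq> {}"
    then have "R0 \<inter> {1} \<times> {..<3} \<noteq> {}" unfolding lR lP1 .
    then have H: "r ` P \<noteq> R0" "retraction ({2..n} \<times> {..<3}) le r" "r ` ({2..n} \<times> {..<3}) = r ` P - R0"
      using M3 by auto
    show "height R le \<ge> 1
             \<and> is_retract_of (levels_between R le 1 (height R le)) le
                             (levels_between P le 2 (height P le)) le" by (rule part1c[OF H])
  qed
  obtain s0 where s0: "retraction P le s0" "order_iso (s0 ` P) le (r ` P) le"
     "minimals (s0 ` P) le \<subseteq> {0} \<times> {..<3}" "s0 ` ({0} \<times> {..<3}) = minimals (s0 ` P) le"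
     "\<exists>p\<in>minimals (s0 ` P) le. {x\<in>P. s0 x = p} = {p}" using M4 by blast
  have C4: "\<exists>s. retraction P le s
             \<and> order_iso (s ` P) le R le
             \<and> level (s ` P) le 0 \<subseteq> level P le 0
             \<and> s ` level P le 0 = level (s ` P) le 0
             \<and> (\<exists>p\<in>level (s ` P) le 0. {x\<in>P. s x = p} = {p})"
  proof (intro exI[of _ s0] conjI)
    have e1: "level (s0 ` P) le 0 = minimals (s0 ` P) le" by (rule level_0)
    show "retraction P le s0" by (rule s0(1))
    show "order_iso (s0 ` P) le R le" unfolding R_def by (rule s0(2))
    show "level (s0 ` P) le 0 \<subseteq> level P le 0" unfolding e1 lP0 by (rule s0(3))
    show "s0 ` level P le 0 = level (s0 ` P) le 0" unfolding e1 lP0 by (rule s0(4))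
    show "\<exists>p\<in>level (s0 ` P) le 0. {x\<in>P. s0 x = p} = {p}" unfolding e1 by (rule s0(5))
  qed
  show ?thesis by (rule conjI[OF conjI[OF C1 conjI[OF C2 C3]] C4])
qed


end
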